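(* Let $\rho = (\mathcal{V}, V, \mathbf{1}, \mathrm{var}, \mathrm{low}, \mathrm{high}, \mathrm{flip})$ be a COBDD with $\mathcal{V} = \mathcal{X} \,\dot\cup\, \mathcal{U}$, where $\mathcal X=\{x_1,\dots,x_n\}$ and $\mathcal U=\{u_1,\dots,u_r\}$, let $v \in V$ be a node, $b \in \mathbb{B}$ a boolean, and let $[\![ v, b]\!] = K(\mathbf{x}, \mathbf{u})$. Then the C function K output by Synthesize$(\rho, v, b)$ has worst case execution time $O(rn)$.
   Context: $\mathbb{B}=\{0,1\}$; $\exists y\, f := f|_{y=0}+f|_{y=1}$. A COBDD is a tuple $\rho = (\mathcal{V}, V, \mathbf{1}, \mathrm{var}, \mathrm{low}, \mathrm{high}, \mathrm{flip})$ with $\mathcal V$ a finite totally ordered set of boolean variables, $V$ a finite set of nodes, $\mathbf 1\in V$ the terminal node, $\mathrm{var}: V\setminus\{\mathbf 1\}\to\mathcal V$, $\mathrm{high},\mathrm{low}: V\setminus\{\mathbf 1\}\to V$, $\mathrm{flip}: V\setminus\{\mathbf 1\}\to\mathbb B$, with variables strictly increasing along edges $v\to\mathrm{high}(v)$, $v\to\mathrm{low}(v)$; COBDDs are assumed reduced. $\mathrm{height}(v)$ is the length of the longest path from $v$ to $\mathbf 1$. Semantics: $[\![ \mathbf 1, b]\!] := \bar b$ and, for internal $v$ with $\mathrm{var}(v)=y$, $[\![ v,b]\!] := y [\![ \mathrm{high}(v), b]\!] + \bar y [\![ \mathrm{low}(v), b\oplus \mathrm{flip}(v)]\!]$. Synthesize$(\rho,v,b)$: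 (1) for $i=1,\dots,r$ compute (via correct COBDD substitution/quantification operations) a node $v_i$ and bit $b_i$ with $[\![ v_i,b_i]\!] = \exists u_{i+1},\dots,u_r\, K(\mathbf x, [\![ v_1,b_1]\!],\dots,[\![ v_{i-1},b_{i-1}]\!], 1, u_{i+1},\dots,u_r)$; (2) emit C code "int K_bits(int *x, int action) { int ret_b; switch(action) { case $i-1$: ret_b = $\bar b_i$; goto L_$v_i$; ... }" followed by one labeled block per node $w$ reachable from some $v_i$ (each node translated once): "L_$\mathbf 1$: return ret_b;" for the terminal, and for internal $w$ with $\mathrm{var}(w)=x_j$, "L_$w$: if (x[$j-1$] == 1) goto L_$\mathrm{high}(w)$; else {ret_b = !ret_b; goto L_$\mathrm{low}(w)$;}" if $\mathrm{flip}(w)=1$, or "... else goto L_$\mathrm{low}(w)$;" if $\mathrm{flip}(w)=0$; then "}" and "void K(int *x,int *u){int i; for(i=0;i<$r$;i++) u[i]=K_bits(x,i);}". Execution time is counted in executed C statements. *)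

theory Defs
  imports Main
begin

(* Boolean variables: x_j is  Xv j  (1 \<le> j \<le> n),  u_i is  Uv i  (1 \<le> i \<le> r). *)
datatype cvar = Xv nat | Uv nat

(* A COBDD rho = (V_set, V, 1, var, low, high, flip); the total order on the
   variable set is given by an injective rank function. Nodes are naturals. *)
record cobdd =
  c_vars :: "cvar set"
  c_rank :: "cvar \<Rightarrow> nat"
  c_nodes :: "nat set"
  c_one :: nat
  c_var :: "nat \<Rightarrow> cvar"
  c_low :: "nat \<Rightarrow> nat"
  c_high :: "nat \<Rightarrow> nat"
  c_flip :: "nat \<Rightarrow> bool"

definition is_cobdd :: "cobdd \<Rightarrow> bool" where
  "is_cobdd \<rho> \<longleftrightarrow>
     finite (c_vars \<rho>) \<and> inj_on (c_rank \<rho>) (c_vars \<rho>) \<and>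
     finite (c_nodes \<rho>) \<and> c_one \<rho> \<in> c_nodes \<rho> \<and>
     (\<forall>w \<in> c_nodes \<rho> - {c_one \<rho>}.
        c_var \<rho> w \<in> c_vars \<rho> \<and>
        c_high \<rho> w \<in> c_nodes \<rho> \<and> c_low \<rho> w \<in> c_nodes \<rho> \<and>
        (c_high \<rho> w \<noteq> c_one \<rho> \<longrightarrow>
           c_rank \<rho> (c_var \<rho> w) < c_rank \<rho> (c_var \<rho> (c_high \<rho> w))) \<and>
        (c_low \<rho> w \<noteq> c_one \<rho> \<longrightarrow>
           c_rank \<rho> (c_var \<rho> w) < c_rank \<rho> (c_var \<rho> (c_low \<rho> w))))"

definition reduced :: "cobdd \<Rightarrow> bool" where
  "reduced \<rho> \<longleftrightarrow>
     (\<forall>w \<in> c_nodes \<rho> - {c_one \<rho>}.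
        \<not> (c_high \<rho> w = c_low \<rho> w \<and> \<not> c_flip \<rho> w)) \<and>
     (\<forall>w \<in> c_nodes \<rho> - {c_one \<rho>}. \<forall>w' \<in> c_nodes \<rho> - {c_one \<rho>}.
        c_var \<rho> w = c_var \<rho> w' \<and> c_high \<rho> w = c_high \<rho> w' \<and>
        c_low \<rho> w = c_low \<rho> w' \<and> c_flip \<rho> w = c_flip \<rho> w' \<longrightarrow> w = w')"

definition reduced_cobdd :: "cobdd \<Rightarrow> bool" where
  "reduced_cobdd \<rho> \<longleftrightarrow> is_cobdd \<rho> \<and> reduced \<rho>"

definition extends :: "cobdd \<Rightarrow> cobdd \<Rightarrow> bool" where
  "extends \<rho>' \<rho> \<longleftrightarrow>
     c_vars \<rho>' = c_vars \<rho> \<and> c_rank \<rho>' = c_rank \<rho> \<and> c_one \<rho>' = c_one \<rho> \<and>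
     c_nodes \<rho> \<subseteq> c_nodes \<rho>' \<and>
     (\<forall>w \<in> c_nodes \<rho> - {c_one \<rho>}.
        c_var \<rho>' w = c_var \<rho> w \<and> c_high \<rho>' w = c_high \<rho> w \<and>
        c_low \<rho>' w = c_low \<rho> w \<and> c_flip \<rho>' w = c_flip \<rho> w)"

(* The recursion follows a path of a well-formed COBDD, whose length is
   below the number of nodes, so the fuel  card (c_nodes rho)  suffices. *)
fun semf :: "cobdd \<Rightarrow> nat \<Rightarrow> nat \<Rightarrow> bool \<Rightarrow> (cvar \<Rightarrow> bool) \<Rightarrow> bool" where
  "semf \<rho> 0 w b \<sigma> = (\<not> b)"
| "semf \<rho> (Suc k) w b \<sigma> =
     (if w = c_one \<rho> then \<not> b
      else if \<sigma> (c_var \<rho> w) then semf \<rho> k (c_high \<rho> w) b \<sigma>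
      else semf \<rho> k (c_low \<rho> w) (b \<noteq> c_flip \<rho> w) \<sigma>)"

definition sem :: "cobdd \<Rightarrow> nat \<Rightarrow> bool \<Rightarrow> (cvar \<Rightarrow> bool) \<Rightarrow> bool" where
  "sem \<rho> w b \<sigma> = semf \<rho> (card (c_nodes \<rho>)) w b \<sigma>"

(* Step (1) of Synthesize: v_i, b_i (i = 1..r) satisfy
   [[v_i,b_i]] = EX u_{i+1}..u_r. K(x, [[v_1,b_1]],..,[[v_{i-1},b_{i-1}]], 1, u_{i+1},..,u_r)
   where K = [[v,b]] (a node of rho). *)
definition synth_spec ::
  "cobdd \<Rightarrow> nat \<Rightarrow> bool \<Rightarrow> cobdd \<Rightarrow> nat \<Rightarrow> (nat \<Rightarrow> nat) \<Rightarrow> (nat \<Rightarrow> bool) \<Rightarrow> bool" where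
  "synth_spec \<rho> v b \<rho>' r vs bs \<longleftrightarrow>
     (\<forall>i \<in> {1..r}. vs i \<in> c_nodes \<rho>' \<and>
        (\<forall>\<sigma>. sem \<rho>' (vs i) (bs i) \<sigma> =
           (\<exists>\<tau>. sem \<rho> v b
              (\<lambda>y. case y of
                  Xv j \<Rightarrow> \<sigma> (Xv j)
                | Uv j \<Rightarrow> (if j < i then sem \<rho>' (vs j) (bs j) \<sigma>
                            else if j = i then True else \<tau> j)))))"

(* A tiny model of the emitted C code (labels are nodes). *)
datatype cstmt =
    CSetRet bool                 (* ret_b = c;  *)
  | CNeg                         (* ret_b = !ret_b; *)
  | CGoto nat
  | CReturn
  | CIf nat "cstmt list" "cstmt list"   (* if (x[k] == 1) S1 else S2 *)

(* Block of label L_w, as emitted by step (2) of Synthesize. *)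
definition block :: "cobdd \<Rightarrow> nat \<Rightarrow> cstmt list" where
  "block \<rho> w =
     (if w = c_one \<rho> then [CReturn]
      else (case c_var \<rho> w of
              Xv j \<Rightarrow> [CIf (j - 1) [CGoto (c_high \<rho> w)]
                           ((if c_flip \<rho> w then [CNeg] else []) @ [CGoto (c_low \<rho> w)])]
            | Uv j \<Rightarrow> []))"

(* Execution with fuel; returns the returned value and the number of
   executed statements (an 'if' counts 1 plus its executed branch). *)
fun run :: "nat \<Rightarrow> (nat \<Rightarrow> bool) \<Rightarrow> (nat \<Rightarrow> cstmt list) \<Rightarrow> cstmt list \<Rightarrow> bool
            \<Rightarrow> (bool \<times> nat) option" where
  "run 0 x B ss r = None"
| "run (Suc f) x B [] r = None"
| "run (Suc f) x B (CSetRet c # ss) r = map_option (\<lambda>(v,t). (v, Suc t)) (run f x B ss c)"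
| "run (Suc f) x B (CNeg # ss) r = map_option (\<lambda>(v,t). (v, Suc t)) (run f x B ss (\<not> r))"
| "run (Suc f) x B (CGoto l # ss) r = map_option (\<lambda>(v,t). (v, Suc t)) (run f x B (B l) r)"
| "run (Suc f) x B (CReturn # ss) r = Some (r, 1)"
| "run (Suc f) x B (CIf k s1 s2 # ss) r =
     map_option (\<lambda>(v,t). (v, Suc t)) (run f x B ((if x k then s1 else s2) @ ss) r)"

(* K_bits(x, action) terminates after executing t statements:
   the switch (1 statement), then  ret_b = !b_{i+1}; goto L_{v_{i+1}};  ... *)
definition kbits_exec ::
  "cobdd \<Rightarrow> (nat \<Rightarrow> nat) \<Rightarrow> (nat \<Rightarrow> bool) \<Rightarrow> (nat \<Rightarrow> bool) \<Rightarrow> nat \<Rightarrow> nat \<Rightarrow> bool" where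
  "kbits_exec \<rho> vs bs x a t \<longleftrightarrow>
     (\<exists>f ret t'. run f x (block \<rho>)
                    [CSetRet (\<not> bs (a + 1)), CGoto (vs (a + 1))] False = Some (ret, t')
               \<and> t = Suc t')"

(* K(x,u) terminates after executing t statements: the loop
   for(i=0;i<r;i++) u[i]=K_bits(x,i);  costs 1 init + (r+1) tests + r increments
   + r assignments, plus the statements executed inside the calls. *)
definition K_exec ::
  "cobdd \<Rightarrow> nat \<Rightarrow> (nat \<Rightarrow> nat) \<Rightarrow> (nat \<Rightarrow> bool) \<Rightarrow> (nat \<Rightarrow> bool) \<Rightarrow> nat \<Rightarrow> bool" where
  "K_exec \<rho> r vs bs x t \<longleftrightarrow>
     (\<exists>ts. (\<forall>a < r. kbits_exec \<rho> vs bs x a (ts a)) \<and>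
           t = 3 * r + 2 + (\<Sum>a<r. ts a))"

end

theory Submission
  imports Defs
begin

lemma semf_vars:
  assumes "is_cobdd R" "w \<in> c_nodes R" "\<forall>y\<in>c_vars R. \<sigma> y = \<sigma>' y"
  shows "semf R k w b \<sigma> = semf R k w b \<sigma>'"
  using assms(2)
proof (induction k arbitrary: w b)
  case 0 then show ?case by simp
next
  case (Suc k)
  show ?case
  proof (cases "w = c_one R")
    case True then show ?thesis by simp
  next
    case False
    with Suc.prems assms(1) have h: "c_var R w \<in> c_vars R" "c_high R w \<in> c_nodes R" "c_low R w \<in> c_nodes R"
      unfolding is_cobdd_def by auto
    with assms(3) Suc.IH show ?thesis using False by simp
  qed
qed

locale RC =
  fixes R :: cobdd
  assumes rc: "reduced_cobdd R"
begin

abbreviation "V \<equiv> c_nodes R"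
abbreviation "one \<equiv> c_one R"
abbreviation "var \<equiv> c_var R"
abbreviation "hi \<equiv> c_high R"
abbreviation "lo \<equiv> c_low R"
abbreviation "fl \<equiv> c_flip R"
abbreviation "rk \<equiv> c_rank R"

lemma isc: "is_cobdd R" and red: "reduced R" using rc unfolding reduced_cobdd_def by auto

lemma finV: "finite V" and oneV: "one \<in> V" and injr: "inj_on rk (c_vars R)"
  using isc unfolding is_cobdd_def by auto

lemma nd: assumes "w \<in> V" "w \<noteq> one"
  shows "var w \<in> c_vars R" "hi w \<in> V" "lo w \<in> V"
    "hi w \<noteq> one \<Longrightarrow> rk (var w) < rk (var (hi w))"
    "lo w \<noteq> one \<Longrightarrow> rk (var w) < rk (var (lo w))"
  using isc assms unfolding is_cobdd_def by auto

definition hh :: "nat \<Rightarrow> nat" where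
  "hh w = (if w = one then 0 else card {u \<in> V - {one}. rk (var w) \<le> rk (var u)})"

lemma hh_le: assumes "w \<in> V" "w \<noteq> one" "u \<in> V" "u \<noteq> one \<Longrightarrow> rk (var w) < rk (var u)"
  shows "hh u < hh w"
proof -
  let ?S = "\<lambda>w. {u \<in> V - {one}. rk (var w) \<le> rk (var u)}"
  have f: "finite (?S w)" using finV by auto
  have wi: "w \<in> ?S w" using assms by auto
  then have pos: "0 < card (?S w)" using f by (auto simp: card_gt_0_iff)
  show ?thesis
  proof (cases "u = one")
    case True then show ?thesis using pos assms unfolding hh_def by auto
  next
    case False
    have "?S u \<subseteq> ?S w - {w}" using assms(4)[OF False] by auto
    then have "card (?S u) \<le> card (?S w - {w})" using f by (intro card_mono) auto
    also have "\<dots> < card (?S w)" by (rule card_Diff1_less[OF f wi])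
    finally show ?thesis using False assms unfolding hh_def by auto
  qed
qed

lemma hh_hi: "w \<in> V \<Longrightarrow> w \<noteq> one \<Longrightarrow> hh (hi w) < hh w"
  by (rule hh_le[OF _ _ nd(2) nd(4)])
lemma hh_lo: "w \<in> V \<Longrightarrow> w \<noteq> one \<Longrightarrow> hh (lo w) < hh w"
  by (rule hh_le[OF _ _ nd(3) nd(5)])

lemma hh_card: "w \<in> V \<Longrightarrow> hh w < card V"
proof -
  assume w: "w \<in> V"
  have "{u \<in> V - {one}. rk (var w) \<le> rk (var u)} \<subseteq> V - {one}" by auto
  then have "card {u \<in> V - {one}. rk (var w) \<le> rk (var u)} \<le> card (V - {one})"
    using finV by (intro card_mono) auto
  also have "\<dots> < card V" by (rule card_Diff1_less[OF finV oneV])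
  finally have "card {u \<in> V - {one}. rk (var w) \<le> rk (var u)} < card V" .
  moreover have "0 < card V" using finV oneV by (auto simp: card_gt_0_iff)
  ultimately show ?thesis unfolding hh_def by simp
qed

lemma fuel: "w \<in> V \<Longrightarrow> hh w < k \<Longrightarrow> hh w < k' \<Longrightarrow> semf R k w b \<sigma> = semf R k' w b \<sigma>"
proof (induction k arbitrary: k' w b)
  case 0 then show ?case by simp
next
  case (Suc k)
  then obtain k'' where k': "k' = Suc k''" by (cases k') auto
  show ?case
  proof (cases "w = one")
    case True then show ?thesis using k' by simp
  next
    case False
    have h: "hh (hi w) < k" "hh (hi w) < k''" "hh (lo w) < k" "hh (lo w) < k''"
      using hh_hi[OF Suc.prems(1) False] hh_lo[OF Suc.prems(1) False] Suc.prems k' by auto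
    have e1: "semf R k (hi w) b \<sigma> = semf R k'' (hi w) b \<sigma>"
      by (rule Suc.IH[OF nd(2)[OF Suc.prems(1) False] h(1,2)])
    have e2: "semf R k (lo w) d \<sigma> = semf R k'' (lo w) d \<sigma>" for d
      by (rule Suc.IH[OF nd(3)[OF Suc.prems(1) False] h(3,4)])
    show ?thesis unfolding k' using False e1 e2 by simp
  qed
qed

definition S :: "nat \<Rightarrow> bool \<Rightarrow> (cvar \<Rightarrow> bool) \<Rightarrow> bool" where
  "S w c \<sigma> = semf R (Suc (hh w)) w c \<sigma>"

lemma S_one: "S one c \<sigma> = (\<not> c)" unfolding S_def by simp

lemma S_int: assumes "w \<in> V" "w \<noteq> one"
  shows "S w c \<sigma> = (if \<sigma> (var w) then S (hi w) c \<sigma> else S (lo w) (c \<noteq> fl w) \<sigma>)"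
proof -
  have "semf R (hh w) (hi w) c \<sigma> = S (hi w) c \<sigma>" unfolding S_def
    using fuel[OF nd(2)[OF assms] hh_hi[OF assms], of "Suc (hh (hi w))"] by simp
  moreover have "semf R (hh w) (lo w) (c \<noteq> fl w) \<sigma> = S (lo w) (c \<noteq> fl w) \<sigma>" unfolding S_def
    using fuel[OF nd(3)[OF assms] hh_lo[OF assms], of "Suc (hh (lo w))"] by simp
  ultimately show ?thesis unfolding S_def using assms(2) by simp
qed

lemma sem_S: "w \<in> V \<Longrightarrow> sem R w c \<sigma> = S w c \<sigma>"
  unfolding sem_def S_def by (rule fuel[OF _ hh_card]) auto

lemma supp_semf: "w \<in> V \<Longrightarrow> (w \<noteq> one \<Longrightarrow> rk y < rk (var w)) \<Longrightarrow>
   semf R k w c (\<sigma>(y := a)) = semf R k w c \<sigma>"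
proof (induction k arbitrary: w c)
  case 0 then show ?case by simp
next
  case (Suc k)
  show ?case
  proof (cases "w = one")
    case True then show ?thesis by simp
  next
    case False
    have ne: "var w \<noteq> y" using Suc.prems(2)[OF False] by auto
    have r: "rk y < rk (var w)" by (rule Suc.prems(2)[OF False])
    have "semf R k (hi w) c (\<sigma>(y := a)) = semf R k (hi w) c \<sigma>"
    proof (rule Suc.IH[OF nd(2)[OF Suc.prems(1) False]])
      assume "hi w \<noteq> one" then show "rk y < rk (var (hi w))"
        using nd(4)[OF Suc.prems(1) False] r by linarith
    qed
    moreover have "semf R k (lo w) d (\<sigma>(y := a)) = semf R k (lo w) d \<sigma>" for d
    proof (rule Suc.IH[OF nd(3)[OF Suc.prems(1) False]])
      assume "lo w \<noteq> one" then show "rk y < rk (var (lo w))"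
        using nd(5)[OF Suc.prems(1) False] r by linarith
    qed
    moreover have "(\<sigma>(y := a)) (var w) = \<sigma> (var w)" using ne by simp
    ultimately show ?thesis using False by (simp del: fun_upd_apply)
  qed
qed

lemma supp: "w \<in> V \<Longrightarrow> (w \<noteq> one \<Longrightarrow> rk y < rk (var w)) \<Longrightarrow> S w c (\<sigma>(y := a)) = S w c \<sigma>"
  unfolding S_def by (rule supp_semf)

lemma cof_hi: assumes "w \<in> V" "w \<noteq> one" shows "S w c (\<sigma>(var w := True)) = S (hi w) c \<sigma>"
proof -
  have "S w c (\<sigma>(var w := True)) = S (hi w) c (\<sigma>(var w := True))"
    using S_int[OF assms, of c "\<sigma>(var w := True)"] by simp
  also have "\<dots> = S (hi w) c \<sigma>"
    by (rule supp[OF nd(2)[OF assms] nd(4)[OF assms]])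
  finally show ?thesis .
qed
lemma cof_lo: assumes "w \<in> V" "w \<noteq> one" shows "S w c (\<sigma>(var w := False)) = S (lo w) (c \<noteq> fl w) \<sigma>"
proof -
  have "S w c (\<sigma>(var w := False)) = S (lo w) (c \<noteq> fl w) (\<sigma>(var w := False))"
    using S_int[OF assms, of c "\<sigma>(var w := False)"] by simp
  also have "\<dots> = S (lo w) (c \<noteq> fl w) \<sigma>"
    by (rule supp[OF nd(3)[OF assms] nd(5)[OF assms]])
  finally show ?thesis .
qed

end

context RC begin

lemma red1: "w \<in> V \<Longrightarrow> w \<noteq> one \<Longrightarrow> hi w = lo w \<Longrightarrow> fl w"
  using red unfolding reduced_def by blast

lemma red2: "w \<in> V \<Longrightarrow> w \<noteq> one \<Longrightarrow> w' \<in> V \<Longrightarrow> w' \<noteq> one \<Longrightarrow> var w = var w' \<Longrightarrow>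
   hi w = hi w' \<Longrightarrow> lo w = lo w' \<Longrightarrow> fl w = fl w' \<Longrightarrow> w = w'"
  using red unfolding reduced_def by blast

lemma canon:
  "w1 \<in> V \<Longrightarrow> w2 \<in> V \<Longrightarrow> (\<forall>\<sigma>. S w1 c1 \<sigma> = S w2 c2 \<sigma>) \<Longrightarrow> w1 = w2 \<and> c1 = c2"
proof (induction "max (hh w1) (hh w2)" arbitrary: w1 w2 c1 c2 rule: less_induct)
  case less
  have dep: "\<exists>\<sigma>. S w c (\<sigma>(var w := True)) \<noteq> S w c (\<sigma>(var w := False))"
    if w: "w \<in> V" "w \<noteq> one" "hh w \<le> max (hh w1) (hh w2)" for w c
  proof (rule ccontr)
    assume a: "\<not> ?thesis"
    have e: "\<forall>\<sigma>. S (hi w) c \<sigma> = S (lo w) (c \<noteq> fl w) \<sigma>"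
    proof
      fix \<sigma> show "S (hi w) c \<sigma> = S (lo w) (c \<noteq> fl w) \<sigma>"
        using a cof_hi[OF w(1,2), of c \<sigma>] cof_lo[OF w(1,2), of c \<sigma>] by simp
    qed
    have m: "max (hh (hi w)) (hh (lo w)) < max (hh w1) (hh w2)"
      using hh_hi[OF w(1,2)] hh_lo[OF w(1,2)] w(3) by simp
    have "hi w = lo w \<and> c = (c \<noteq> fl w)"
      by (rule less.hyps[OF m nd(2)[OF w(1,2)] nd(3)[OF w(1,2)] e])
    then show False using red1[OF w(1,2)] by auto
  qed
  have const: False if tc: "w \<in> V" "w \<noteq> one" "hh w \<le> max (hh w1) (hh w2)" "\<forall>\<sigma>. S w c \<sigma> = d" for w c d
  proof -
    obtain \<sigma> where "S w c (\<sigma>(var w := True)) \<noteq> S w c (\<sigma>(var w := False))"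
      using dep[OF tc(1-3)] by blast
    then show False using tc(4) by simp
  qed
  show ?case
  proof (cases "w1 = one")
    case T1: True
    show ?thesis
    proof (cases "w2 = one")
      case True then show ?thesis using T1 less.prems S_one by auto
    next
      case False
      have "\<forall>\<sigma>. S w2 c2 \<sigma> = (\<not> c1)" using less.prems(3) T1 S_one by simp
      then show ?thesis using const[OF less.prems(2) False max.cobounded2] by blast
    qed
  next
    case F1: False
    show ?thesis
    proof (cases "w2 = one")
      case True
      have "\<forall>\<sigma>. S w1 c1 \<sigma> = (\<not> c2)" using less.prems(3) True S_one by simp
      then show ?thesis using const[OF less.prems(1) F1 max.cobounded1] by blast
    next
      case F2: False
      have lt: False if tl: "rk (var wa) < rk (var wb)" "wa \<in> V" "wa \<noteq> one" "wb \<in> V"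
        "hh wa \<le> max (hh w1) (hh w2)" "\<forall>\<sigma>. S wa ca \<sigma> = S wb cb \<sigma>" for wa wb ca cb
      proof -
        obtain \<sigma> where s: "S wa ca (\<sigma>(var wa := True)) \<noteq> S wa ca (\<sigma>(var wa := False))"
          using dep[OF tl(2,3,5)] by blast
        have "S wb cb (\<sigma>(var wa := a)) = S wb cb \<sigma>" for a
          using supp[OF tl(4)] tl(1) by simp
        then show False using tl(6) s by simp
      qed
      have "\<not> rk (var w1) < rk (var w2)"
        using lt[OF _ less.prems(1) F1 less.prems(2)] less.prems(3) by auto
      moreover have "\<not> rk (var w2) < rk (var w1)"
        using lt[OF _ less.prems(2) F2 less.prems(1)] less.prems(3) by auto
      ultimately have "rk (var w1) = rk (var w2)" by simp
      then have vv: "var w1 = var w2"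
        using inj_onD[OF injr _ nd(1)[OF less.prems(1) F1] nd(1)[OF less.prems(2) F2]] by simp
      have eh: "\<forall>\<sigma>. S (hi w1) c1 \<sigma> = S (hi w2) c2 \<sigma>"
      proof
        fix \<sigma> show "S (hi w1) c1 \<sigma> = S (hi w2) c2 \<sigma>"
          using cof_hi[OF less.prems(1) F1, of c1 \<sigma>] cof_hi[OF less.prems(2) F2, of c2 \<sigma>]
            less.prems(3) vv by simp
      qed
      have el: "\<forall>\<sigma>. S (lo w1) (c1 \<noteq> fl w1) \<sigma> = S (lo w2) (c2 \<noteq> fl w2) \<sigma>"
      proof
        fix \<sigma> show "S (lo w1) (c1 \<noteq> fl w1) \<sigma> = S (lo w2) (c2 \<noteq> fl w2) \<sigma>"
          using cof_lo[OF less.prems(1) F1, of c1 \<sigma>] cof_lo[OF less.prems(2) F2, of c2 \<sigma>]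
            less.prems(3) vv by simp
      qed
      have m1: "max (hh (hi w1)) (hh (hi w2)) < max (hh w1) (hh w2)"
        and m2: "max (hh (lo w1)) (hh (lo w2)) < max (hh w1) (hh w2)"
        using hh_hi[OF less.prems(1) F1] hh_hi[OF less.prems(2) F2]
          hh_lo[OF less.prems(1) F1] hh_lo[OF less.prems(2) F2] by auto
      have h1: "hi w1 = hi w2 \<and> c1 = c2"
        by (rule less.hyps[OF m1 nd(2)[OF less.prems(1) F1] nd(2)[OF less.prems(2) F2] eh])
      have h2: "lo w1 = lo w2 \<and> (c1 \<noteq> fl w1) = (c2 \<noteq> fl w2)"
        by (rule less.hyps[OF m2 nd(3)[OF less.prems(1) F1] nd(3)[OF less.prems(2) F2] el])
      have "fl w1 = fl w2" using h1 h2 by auto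
      then have "w1 = w2" using red2[OF less.prems(1) F1 less.prems(2) F2 vv] h1 h2 by blast
      then show ?thesis using h1 by simp
    qed
  qed
qed

lemma dep: "w \<in> V \<Longrightarrow> w \<noteq> one \<Longrightarrow> \<exists>\<sigma>. S w c (\<sigma>(var w := True)) \<noteq> S w c (\<sigma>(var w := False))"
proof (rule ccontr)
  assume w: "w \<in> V" "w \<noteq> one" and a: "\<not> (\<exists>\<sigma>. S w c (\<sigma>(var w := True)) \<noteq> S w c (\<sigma>(var w := False)))"
  have "\<forall>\<sigma>. S (hi w) c \<sigma> = S (lo w) (c \<noteq> fl w) \<sigma>"
  proof
    fix \<sigma> show "S (hi w) c \<sigma> = S (lo w) (c \<noteq> fl w) \<sigma>"
      using a cof_hi[OF w(1,2), of c \<sigma>] cof_lo[OF w(1,2), of c \<sigma>] by simp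
  qed
  then have "hi w = lo w \<and> c = (c \<noteq> fl w)" using canon nd[OF w] by blast
  then show False using red1[OF w(1,2)] by auto
qed

end

lemma run_goto: "run f x B [CGoto l] r = Some (v,t) \<Longrightarrow> \<exists>f' t'. run f' x B (B l) r = Some (v,t') \<and> t = Suc t'"
  by (cases f) auto
lemma run_neg: "run f x B (CNeg # ss) r = Some (v,t) \<Longrightarrow> \<exists>f' t'. run f' x B ss (\<not> r) = Some (v,t') \<and> t = Suc t'"
  by (cases f) auto
lemma run_set: "run f x B (CSetRet c # ss) r = Some (v,t) \<Longrightarrow> \<exists>f' t'. run f' x B ss c = Some (v,t') \<and> t = Suc t'"
  by (cases f) auto
lemma run_if: "run f x B [CIf k s1 s2] r = Some (v,t) \<Longrightarrow>
  \<exists>f' t'. run f' x B (if x k then s1 else s2) r = Some (v,t') \<and> t = Suc t'"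
  by (cases f) auto

context RC begin

definition gX :: "nat \<Rightarrow> nat \<Rightarrow> nat" where
  "gX n w = (if w = one then 0 else card {j \<in> {1..n}. rk (var w) \<le> rk (Xv j)})"

lemma gX_le: "gX n w \<le> n"
proof -
  have "card {j \<in> {1..n}. rk (var w) \<le> rk (Xv j)} \<le> card {1..n}"
    by (rule card_mono) auto
  then show ?thesis unfolding gX_def by auto
qed

lemma gX_lt: assumes "w \<noteq> one" "var w = Xv j" "j \<in> {1..n}" "u \<noteq> one \<Longrightarrow> rk (var w) < rk (var u)"
  shows "gX n u < gX n w"
proof -
  let ?A = "\<lambda>w. {j \<in> {1..n}. rk (var w) \<le> rk (Xv j)}"
  have f: "finite (?A w)" by auto
  have ji: "j \<in> ?A w" using assms by auto
  then have pos: "0 < card (?A w)" using f by (auto simp: card_gt_0_iff)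
  show ?thesis
  proof (cases "u = one")
    case True then show ?thesis using pos assms unfolding gX_def by auto
  next
    case False
    have "?A u \<subseteq> ?A w - {j}" using assms(4)[OF False] assms(2) by auto
    then have "card (?A u) \<le> card (?A w - {j})" using f by (intro card_mono) auto
    also have "\<dots> < card (?A w)" by (rule card_Diff1_less[OF f ji])
    finally show ?thesis using False assms unfolding gX_def by auto
  qed
qed

lemma exec:
  assumes vars: "c_vars R = Xv ` {1..n} \<union> Uv ` {1..r}"
  shows "w \<in> V \<Longrightarrow> (\<forall>\<sigma> \<sigma>'. (\<forall>j. \<sigma> (Xv j) = \<sigma>' (Xv j)) \<longrightarrow> S w c \<sigma> = S w c \<sigma>') \<Longrightarrow>
   (\<exists>f res t. run f x (block R) (block R w) rr = Some (res,t)) \<and>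
   (\<forall>f res t. run f x (block R) (block R w) rr = Some (res,t) \<longrightarrow> t \<le> 3 * gX n w + 1)"
proof (induction "hh w" arbitrary: w c rr rule: less_induct)
  case less
  show ?case
  proof (cases "w = one")
    case True
    have b: "block R w = [CReturn]" using True by (simp add: block_def)
    have "run (Suc 0) x (block R) (block R w) rr = Some (rr, 1)" using b by simp
    moreover have "t \<le> 3 * gX n w + 1" if "run f x (block R) (block R w) rr = Some (res,t)" for f res t
      using that b by (cases f) auto
    ultimately show ?thesis by blast
  next
    case False
    have vw: "var w \<in> c_vars R" using nd(1)[OF less.prems(1) False] .
    obtain j where j: "var w = Xv j" "j \<in> {1..n}"
    proof (cases "var w")
      case (Xv j) then show ?thesis using that vw vars by auto
    next
      case (Uv j)
      obtain \<sigma> where s: "S w c (\<sigma>(var w := True)) \<noteq> S w c (\<sigma>(var w := False))"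
        using dep[OF less.prems(1) False] by blast
      have "S w c (\<sigma>(var w := True)) = S w c (\<sigma>(var w := False))"
        using less.prems(2) Uv by simp
      then show ?thesis using s by simp
    qed
    have blk: "block R w = [CIf (j - 1) [CGoto (hi w)] ((if fl w then [CNeg] else []) @ [CGoto (lo w)])]"
      using False j by (simp add: block_def)
    have ih: "\<lbrakk>hh u < hh w; u \<in> V; \<forall>\<sigma> \<sigma>'. (\<forall>j. \<sigma> (Xv j) = \<sigma>' (Xv j)) \<longrightarrow> S u d \<sigma> = S u d \<sigma>'\<rbrakk> \<Longrightarrow>
       (\<exists>f res t. run f x (block R) (block R u) rr' = Some (res,t)) \<and>
       (\<forall>f res t. run f x (block R) (block R u) rr' = Some (res,t) \<longrightarrow> t \<le> 3 * gX n u + 1)"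
      for u d rr' using less.hyps by blast
    have ih_hi: "(\<exists>f res t. run f x (block R) (block R (hi w)) rr' = Some (res,t)) \<and>
       (\<forall>f res t. run f x (block R) (block R (hi w)) rr' = Some (res,t) \<longrightarrow> t \<le> 3 * gX n (hi w) + 1)" for rr'
    proof (rule ih[OF hh_hi[OF less.prems(1) False] nd(2)[OF less.prems(1) False], of c], intro allI impI)
      fix \<sigma> \<sigma>' :: "cvar \<Rightarrow> bool" assume a: "\<forall>j. \<sigma> (Xv j) = \<sigma>' (Xv j)"
      have "S w c (\<sigma>(var w := True)) = S w c (\<sigma>'(var w := True))"
        using less.prems(2) a by simp
      then show "S (hi w) c \<sigma> = S (hi w) c \<sigma>'"
        using cof_hi[OF less.prems(1) False] by simp
    qed
    have ih_lo: "(\<exists>f res t. run f x (block R) (block R (lo w)) rr' = Some (res,t)) \<and>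
       (\<forall>f res t. run f x (block R) (block R (lo w)) rr' = Some (res,t) \<longrightarrow> t \<le> 3 * gX n (lo w) + 1)" for rr'
    proof (rule ih[OF hh_lo[OF less.prems(1) False] nd(3)[OF less.prems(1) False], of "c \<noteq> fl w"], intro allI impI)
      fix \<sigma> \<sigma>' :: "cvar \<Rightarrow> bool" assume a: "\<forall>j. \<sigma> (Xv j) = \<sigma>' (Xv j)"
      have "S w c (\<sigma>(var w := False)) = S w c (\<sigma>'(var w := False))"
        using less.prems(2) a by simp
      then show "S (lo w) (c \<noteq> fl w) \<sigma> = S (lo w) (c \<noteq> fl w) \<sigma>'"
        using cof_lo[OF less.prems(1) False] by simp
    qed
    have ghi: "gX n (hi w) < gX n w"
      by (rule gX_lt[OF False j nd(4)[OF less.prems(1) False]])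
    have glo: "gX n (lo w) < gX n w"
      by (rule gX_lt[OF False j nd(5)[OF less.prems(1) False]])
    have ex: "\<exists>f res t. run f x (block R) (block R w) rr = Some (res,t)"
    proof (cases "x (j - 1)")
      case True
      obtain f0 res t0 where "run f0 x (block R) (block R (hi w)) rr = Some (res,t0)" using ih_hi by blast
      then have "run (Suc (Suc f0)) x (block R) (block R w) rr = Some (res, Suc (Suc t0))"
        using blk True by simp
      then show ?thesis by blast
    next
      case xF: False
      obtain f0 res t0 where r0: "run f0 x (block R) (block R (lo w)) (if fl w then \<not> rr else rr) = Some (res,t0)"
        using ih_lo by blast
      show ?thesis
      proof (cases "fl w")
        case True
        then have "run (Suc (Suc (Suc f0))) x (block R) (block R w) rr = Some (res, Suc (Suc (Suc t0)))"
          using blk xF r0 by simp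
        then show ?thesis by blast
      next
        case False
        then have "run (Suc (Suc f0)) x (block R) (block R w) rr = Some (res, Suc (Suc t0))"
          using blk xF r0 by simp
        then show ?thesis by blast
      qed
    qed
    have bd: "t \<le> 3 * gX n w + 1" if run: "run f x (block R) (block R w) rr = Some (res,t)" for f res t
    proof -
      obtain f1 t1 where r1: "run f1 x (block R) (if x (j - 1) then [CGoto (hi w)]
          else ((if fl w then [CNeg] else []) @ [CGoto (lo w)])) rr = Some (res,t1)" and t1: "t = Suc t1"
        using run_if[OF run[unfolded blk]] by blast
      show ?thesis
      proof (cases "x (j - 1)")
        case True
        obtain f2 t2 where "run f2 x (block R) (block R (hi w)) rr = Some (res,t2)" "t1 = Suc t2"
          using run_goto[of f1 x "block R" "hi w" rr res t1] r1 True by auto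
        then show ?thesis using ih_hi t1 ghi by fastforce
      next
        case xF: False
        show ?thesis
        proof (cases "fl w")
          case True
          obtain f2 t2 where r2: "run f2 x (block R) [CGoto (lo w)] (\<not> rr) = Some (res,t2)" "t1 = Suc t2"
            using run_neg[of f1 x "block R" "[CGoto (lo w)]" rr res t1] r1 True xF by auto
          obtain f3 t3 where "run f3 x (block R) (block R (lo w)) (\<not> rr) = Some (res,t3)" "t2 = Suc t3"
            using run_goto[OF r2(1)] by auto
          then show ?thesis using ih_lo t1 r2 glo by fastforce
        next
          case False
          obtain f2 t2 where "run f2 x (block R) (block R (lo w)) rr = Some (res,t2)" "t1 = Suc t2"
            using run_goto[of f1 x "block R" "lo w" rr res t1] r1 False xF by auto
          then show ?thesis using ih_lo t1 glo by fastforce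
        qed
      qed
    qed
    show ?thesis using ex bd by blast
  qed
qed

end

theorem corollary1:
  shows "\<exists>C::nat. \<forall>(n::nat) (r::nat) \<rho> \<rho>' (v::nat) (b::bool) vs bs.
     reduced_cobdd \<rho> \<and> c_vars \<rho> = Xv ` {1..n} \<union> Uv ` {1..r} \<and> v \<in> c_nodes \<rho> \<and>
     1 \<le> n \<and> 1 \<le> r \<and>
     reduced_cobdd \<rho>' \<and> extends \<rho>' \<rho> \<and> synth_spec \<rho> v b \<rho>' r vs bs
     \<longrightarrow> (\<forall>x. (\<exists>t. K_exec \<rho>' r vs bs x t) \<and>
               (\<forall>t. K_exec \<rho>' r vs bs x t \<longrightarrow> t \<le> C * (r * n)))"
proof (intro exI[of _ 12] allI impI)
  fix n r \<rho> \<rho>' v b vs bs x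
  assume A: "reduced_cobdd \<rho> \<and> c_vars \<rho> = Xv ` {1..n} \<union> Uv ` {1..r} \<and> v \<in> c_nodes \<rho> \<and>
     1 \<le> n \<and> 1 \<le> r \<and>
     reduced_cobdd \<rho>' \<and> extends \<rho>' \<rho> \<and> synth_spec \<rho> v b \<rho>' r vs bs"
  then have rho: "reduced_cobdd \<rho>" and vars: "c_vars \<rho> = Xv ` {1..n} \<union> Uv ` {1..r}"
    and vin: "v \<in> c_nodes \<rho>" and n1: "1 \<le> n" and r1: "1 \<le> r" and rho': "reduced_cobdd \<rho>'"
    and ext: "extends \<rho>' \<rho>" and sp: "synth_spec \<rho> v b \<rho>' r vs bs" by auto
  interpret RC \<rho>' by (rule RC.intro[OF rho'])
  have vars': "c_vars \<rho>' = Xv ` {1..n} \<union> Uv ` {1..r}" using ext vars unfolding extends_def by auto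
  have isc0: "is_cobdd \<rho>" using rho unfolding reduced_cobdd_def by auto
  have ind: "\<forall>\<sigma> \<sigma>'. (\<forall>j. \<sigma> (Xv j) = \<sigma>' (Xv j)) \<longrightarrow> sem \<rho>' (vs i) (bs i) \<sigma> = sem \<rho>' (vs i) (bs i) \<sigma>'"
    if "i \<in> {1..r}" for i
    using that
  proof (induction i rule: less_induct)
    case (less i)
    show ?case
    proof (intro allI impI)
      fix \<sigma> \<sigma>' :: "cvar \<Rightarrow> bool" assume a: "\<forall>j. \<sigma> (Xv j) = \<sigma>' (Xv j)"
      let ?g = "\<lambda>\<sigma> \<tau>. (\<lambda>y. case y of
                  Xv j \<Rightarrow> \<sigma> (Xv j)
                | Uv j \<Rightarrow> (if j < i then sem \<rho>' (vs j) (bs j) \<sigma>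
                            else if j = i then True else \<tau> j))"
      have e0: "\<forall>y\<in>c_vars \<rho>. ?g \<sigma> \<tau> y = ?g \<sigma>' \<tau> y" for \<tau>
      proof
        fix y assume y: "y \<in> c_vars \<rho>"
        show "?g \<sigma> \<tau> y = ?g \<sigma>' \<tau> y"
        proof (cases y)
          case (Xv j) then show ?thesis using a by simp
        next
          case (Uv j)
          then have j: "j \<in> {1..r}" using y vars by auto
          show ?thesis
          proof (cases "j < i")
            case True
            then have "sem \<rho>' (vs j) (bs j) \<sigma> = sem \<rho>' (vs j) (bs j) \<sigma>'"
              using less.IH[OF True j] a by blast
            then show ?thesis using Uv True by simp
          qed (use Uv in simp)
        qed
      qed
      have e: "sem \<rho> v b (?g \<sigma> \<tau>) = sem \<rho> v b (?g \<sigma>' \<tau>)" for \<tau>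
        unfolding sem_def[of \<rho> v b] by (rule semf_vars[OF isc0 vin e0])
      show "sem \<rho>' (vs i) (bs i) \<sigma> = sem \<rho>' (vs i) (bs i) \<sigma>'"
        using sp less.prems e unfolding synth_spec_def by simp
    qed
  qed
  have kb: "(\<exists>t. kbits_exec \<rho>' vs bs x a t) \<and> (\<forall>t. kbits_exec \<rho>' vs bs x a t \<longrightarrow> t \<le> 3 * n + 4)"
    if a: "a < r" for a
  proof -
    have i: "a + 1 \<in> {1..r}" using a by auto
    have vi: "vs (a + 1) \<in> V" using sp i unfolding synth_spec_def by blast
    have indS: "\<forall>\<sigma> \<sigma>'. (\<forall>j. \<sigma> (Xv j) = \<sigma>' (Xv j)) \<longrightarrow> S (vs (a+1)) (bs (a+1)) \<sigma> = S (vs (a+1)) (bs (a+1)) \<sigma>'"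
      using ind[OF i] sem_S[OF vi] by simp
    have E: "(\<exists>f res t. run f x (block \<rho>') (block \<rho>' (vs (a+1))) rr = Some (res,t)) \<and>
      (\<forall>f res t. run f x (block \<rho>') (block \<rho>' (vs (a+1))) rr = Some (res,t) \<longrightarrow> t \<le> 3 * gX n (vs (a+1)) + 1)" for rr
      by (rule exec[OF vars' vi indS])
    obtain f0 res t0 where r0: "run f0 x (block \<rho>') (block \<rho>' (vs (a+1))) (\<not> bs (a+1)) = Some (res,t0)"
      using E by blast
    have "run (Suc (Suc f0)) x (block \<rho>') [CSetRet (\<not> bs (a + 1)), CGoto (vs (a + 1))] False
       = Some (res, Suc (Suc t0))" using r0 by simp
    then have ex: "\<exists>t. kbits_exec \<rho>' vs bs x a t" unfolding kbits_exec_def by blast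
    have bd: "t \<le> 3 * n + 4" if k: "kbits_exec \<rho>' vs bs x a t" for t
    proof -
      obtain f ret t' where r: "run f x (block \<rho>') [CSetRet (\<not> bs (a + 1)), CGoto (vs (a + 1))] False = Some (ret, t')"
        and tt: "t = Suc t'" using k unfolding kbits_exec_def by blast
      obtain f1 t1 where r1: "run f1 x (block \<rho>') [CGoto (vs (a + 1))] (\<not> bs (a + 1)) = Some (ret, t1)" "t' = Suc t1"
        using run_set[OF r] by blast
      obtain f2 t2 where r2: "run f2 x (block \<rho>') (block \<rho>' (vs (a+1))) (\<not> bs (a + 1)) = Some (ret, t2)" "t1 = Suc t2"
        using run_goto[OF r1(1)] by blast
      have "t2 \<le> 3 * gX n (vs (a+1)) + 1" using E r2(1) by blast
      moreover have "gX n (vs (a+1)) \<le> n" by (rule gX_le)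
      ultimately show ?thesis using tt r1(2) r2(2) by linarith
    qed
    show ?thesis using ex bd by blast
  qed
  show "(\<exists>t. K_exec \<rho>' r vs bs x t) \<and> (\<forall>t. K_exec \<rho>' r vs bs x t \<longrightarrow> t \<le> 12 * (r * n))"
  proof
    have "\<forall>a<r. \<exists>t. kbits_exec \<rho>' vs bs x a t" using kb by blast
    then obtain ts where "\<forall>a<r. kbits_exec \<rho>' vs bs x a (ts a)" by metis
    then show "\<exists>t. K_exec \<rho>' r vs bs x t" unfolding K_exec_def by blast
  next
    show "\<forall>t. K_exec \<rho>' r vs bs x t \<longrightarrow> t \<le> 12 * (r * n)"
    proof (intro allI impI)
      fix t assume "K_exec \<rho>' r vs bs x t"
      then obtain ts where ts: "\<forall>a<r. kbits_exec \<rho>' vs bs x a (ts a)" and t: "t = 3 * r + 2 + (\<Sum>a<r. ts a)"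
        unfolding K_exec_def by blast
      have "(\<Sum>a<r. ts a) \<le> (\<Sum>a<r. 3 * n + 4)"
        by (rule sum_mono) (use ts kb in auto)
      then have s: "(\<Sum>a<r. ts a) \<le> r * (3 * n + 4)" by simp
      have rn: "r \<le> r * n" using n1 by simp
      have one: "1 \<le> r * n" using n1 r1 by (metis mult_le_mono nat_mult_1)
      have "r * (3 * n + 4) = 3 * (r * n) + 4 * r" by (simp add: algebra_simps)
      then show "t \<le> 12 * (r * n)" using t s rn one by linarith
    qed
  qed
qed

end
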